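(* For every polytope $P$ and every instance $S=((s_1,d_1),\dots,(s_n,d_n))$, letting $m=\max_{t\le T}|\{i:s_i\le t\le d_i\}|$, we have $OPT_A(S;P)=Disp(m;P)$.
   Context: Distances are Euclidean; $\partial P$ is the boundary of $P$. $Disp(n;P)=\max_{X_1,\dots,X_n\in P}\min\{dis(X_i,\partial P),dis(X_i,X_j):i\ne j\}$. An instance has $s_i<d_i$, $0=s_1\le\dots\le s_n$; point $i$ is present at time $t$ iff $s_i\le t\le d_i$; $T=\max_id_i$. For $X\in P^n$, $d_{min}(t;X)=\min\{dis(X_i,\partial P),dis(X_i,X_j)\}$ over present points $i\ne j$ at time $t$, and $OPT_A(S;P)=\max_X\min_{t\le T}d_{min}(t;X)$. *)

theory Defs
  imports "HOL-Analysis.Analysis"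
begin

(* Points are indexed 0..n-1 (paper: 1..n). *)

definition dmin_set :: "'a::euclidean_space set \<Rightarrow> nat set \<Rightarrow> (nat \<Rightarrow> 'a) \<Rightarrow> real" where
  "dmin_set P I X = Inf ({infdist (X i) (frontier P) | i. i \<in> I}
                        \<union> {dist (X i) (X j) | i j. i \<in> I \<and> j \<in> I \<and> i \<noteq> j})"

definition Disp :: "nat \<Rightarrow> 'a::euclidean_space set \<Rightarrow> real" where
  "Disp n P = Sup ((\<lambda>X. dmin_set P {..<n} X) ` {X. \<forall>i<n. X i \<in> P})"

definition present :: "nat \<Rightarrow> (nat \<Rightarrow> real) \<Rightarrow> (nat \<Rightarrow> real) \<Rightarrow> real \<Rightarrow> nat set" where
  "present n s d t = {i. i < n \<and> s i \<le> t \<and> t \<le> d i}"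

definition horizon :: "nat \<Rightarrow> (nat \<Rightarrow> real) \<Rightarrow> real" where
  "horizon n d = Max (d ` {..<n})"

text \<open>min over t \<le> T of d_min(t;X); times with no present point impose no constraint.\<close>
definition OPT_A :: "nat \<Rightarrow> (nat \<Rightarrow> real) \<Rightarrow> (nat \<Rightarrow> real) \<Rightarrow> 'a::euclidean_space set \<Rightarrow> real" where
  "OPT_A n s d P = Sup ((\<lambda>X. Inf ((\<lambda>t. dmin_set P (present n s d t) X)
        ` {t. t \<le> horizon n d \<and> present n s d t \<noteq> {}})) ` {X. \<forall>i<n. X i \<in> P})"

definition max_present :: "nat \<Rightarrow> (nat \<Rightarrow> real) \<Rightarrow> (nat \<Rightarrow> real) \<Rightarrow> nat" where
  "max_present n s d = Max ((\<lambda>t. card (present n s d t)) ` {t. t \<le> horizon n d})"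

end

theory Submission
  imports Defs
begin

lemma dmin_bdd: "bdd_below ({infdist (X i) (frontier P) | i. i \<in> I}
                        \<union> {dist (X i) (X j) | i j. i \<in> I \<and> j \<in> I \<and> i \<noteq> j})"
  by (rule bdd_belowI[of _ 0]) (auto simp: infdist_nonneg)

lemma dmin_le_infdist: "i \<in> I \<Longrightarrow> dmin_set P I X \<le> infdist (X i) (frontier P)"
  unfolding dmin_set_def by (rule cInf_lower[OF _ dmin_bdd]) auto

lemma dmin_le_dist: "i \<in> I \<Longrightarrow> j \<in> I \<Longrightarrow> i \<noteq> j \<Longrightarrow> dmin_set P I X \<le> dist (X i) (X j)"
  unfolding dmin_set_def by (rule cInf_lower[OF _ dmin_bdd]) auto

lemma dmin_ge:
  assumes "I \<noteq> {}" "\<And>i. i \<in> I \<Longrightarrow> c \<le> infdist (X i) (frontier P)"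
    "\<And>i j. i \<in> I \<Longrightarrow> j \<in> I \<Longrightarrow> i \<noteq> j \<Longrightarrow> c \<le> dist (X i) (X j)"
  shows "c \<le> dmin_set P I X"
  unfolding dmin_set_def
  by (rule cInf_greatest) (use assms in auto)

lemma dmin_nonneg: "I \<noteq> {} \<Longrightarrow> 0 \<le> dmin_set P I X"
  by (rule dmin_ge) (auto simp: infdist_nonneg)

lemma dmin_sub:
  assumes "J \<noteq> {}" "e ` J \<subseteq> I" "inj_on e J"
  shows "dmin_set P I X \<le> dmin_set P J (X \<circ> e)"
  using assms
  by (intro dmin_ge) (auto intro!: dmin_le_infdist dmin_le_dist dest: inj_onD)

lemma infdist_bound:
  fixes P :: "'a::euclidean_space set"
  assumes "bounded P"
  shows "\<exists>B. \<forall>x\<in>P. infdist x (frontier P) \<le> B"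
proof -
  obtain B where B: "\<forall>y\<in>closure P. norm y \<le> B"
    using assms bounded_closure bounded_iff by blast
  have "infdist x (frontier P) \<le> 2 * B" if "x \<in> P" for x
  proof (cases "frontier P = {}")
    case True
    have "norm x \<le> B" using B that closure_subset[of P] by blast
    then show ?thesis using True order_trans[OF norm_ge_zero[of x]] by (simp add: infdist_def)
  next
    case False
    then obtain y where y: "y \<in> frontier P" by blast
    then have "y \<in> closure P" by (simp add: frontier_def)
    have "infdist x (frontier P) \<le> dist x y" by (rule infdist_le[OF y])
    also have "\<dots> \<le> norm x + norm y" by (simp add: dist_norm norm_triangle_ineq4)
    also have "\<dots> \<le> 2 * B"
    proof -
      have "norm x \<le> B" "norm y \<le> B" using B \<open>y \<in> closure P\<close> that closure_subset[of P] by auto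
      then show ?thesis by linarith
    qed
    finally show ?thesis .
  qed
  then show ?thesis by blast
qed

lemma coloring_aux:
  fixes s d :: "nat \<Rightarrow> real"
  assumes sd: "\<forall>i<n. s i \<le> d i"
    and mono: "\<forall>i j. i \<le> j \<and> j < n \<longrightarrow> s i \<le> s j"
    and cm: "\<forall>k<n. card (present n s d (s k)) \<le> m"
  shows "k \<le> n \<Longrightarrow> \<exists>c. (\<forall>i<k. c i < m) \<and> (\<forall>i<k. \<forall>j<k. i \<noteq> j \<and>
      (\<exists>t. i \<in> present n s d t \<and> j \<in> present n s d t) \<longrightarrow> c i \<noteq> c j)"
proof (induction k)
  case 0
  then show ?case by auto
next
  case (Suc k)
  then obtain c where c1: "\<forall>i<k. c i < m" and c2: "\<forall>i<k. \<forall>j<k. i \<noteq> j \<and>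
      (\<exists>t. i \<in> present n s d t \<and> j \<in> present n s d t) \<longrightarrow> c i \<noteq> c j" by auto
  have kn: "k < n" using Suc by auto
  define J where "J = {j. j < k \<and> (\<exists>t. j \<in> present n s d t \<and> k \<in> present n s d t)}"
  have "insert k J \<subseteq> present n s d (s k)"
  proof
    fix x assume "x \<in> insert k J"
    then show "x \<in> present n s d (s k)"
    proof
      assume "x = k" then show ?thesis using kn sd by (auto simp: present_def)
    next
      assume "x \<in> J"
      then obtain t where "x < k" "x \<in> present n s d t" "k \<in> present n s d t" unfolding J_def by auto
      moreover have "s x \<le> s k" using mono kn \<open>x < k\<close> by auto
      ultimately show ?thesis using kn sd by (auto simp: present_def)
    qed
  qed
  moreover have "finite (present n s d (s k))" by (simp add: present_def)
  ultimately have "card (insert k J) \<le> m" using cm kn card_mono order_trans by blast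
  moreover have "finite J" unfolding J_def by auto
  moreover have "k \<notin> J" unfolding J_def by auto
  ultimately have cJ: "card J < m" by simp
  have "card (c ` J) < m" using cJ card_image_le[OF \<open>finite J\<close>, of c] by linarith
  then have "\<not> {..<m} \<subseteq> c ` J"
    using card_mono[OF finite_imageI[OF \<open>finite J\<close>]] by fastforce
  then obtain col where col: "col < m" "col \<notin> c ` J" by auto
  define c' where "c' = c(k := col)"
  have "\<forall>i<Suc k. c' i < m" using c1 col unfolding c'_def by (auto simp: less_Suc_eq)
  moreover have "\<forall>i<Suc k. \<forall>j<Suc k. i \<noteq> j \<and>
      (\<exists>t. i \<in> present n s d t \<and> j \<in> present n s d t) \<longrightarrow> c' i \<noteq> c' j"
  proof (intro allI impI)
    fix i j assume ij: "i < Suc k" "j < Suc k" "i \<noteq> j \<and> (\<exists>t. i \<in> present n s d t \<and> j \<in> present n s d t)"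
    show "c' i \<noteq> c' j"
    proof (cases "i = k")
      case True
      then have "j \<in> J" using ij unfolding J_def by (auto simp: less_Suc_eq)
      then show ?thesis using True col ij unfolding c'_def by auto
    next
      case False
      note iF = False
      show ?thesis
      proof (cases "j = k")
        case True
        then have "i \<in> J" using ij iF unfolding J_def by (auto simp: less_Suc_eq)
        then show ?thesis using True col ij unfolding c'_def by auto
      next
        case False
        then show ?thesis using iF c2 ij unfolding c'_def by (auto simp: less_Suc_eq)
      qed
    qed
  qed
  ultimately show ?case by blast
qed

theorem claim2:
  fixes P :: "'a::euclidean_space set" and n :: nat and s d :: "nat \<Rightarrow> real"
  assumes "polytope P"
    and "n \<ge> 1"
    and "\<forall>i<n. s i < d i"
    and "s 0 = 0"
    and "\<forall>i j. i \<le> j \<and> j < n \<longrightarrow> s i \<le> s j"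
  shows "OPT_A n s d P = Disp (max_present n s d) P"
proof -
  define m where "m = max_present n s d"
  define H where "H = horizon n d"
  define pr where "pr = present n s d"
  have n0: "0 < n" using assms(2) by simp
  have dH: "\<forall>i<n. d i \<le> H" unfolding H_def horizon_def by auto
  have prsub: "pr t \<subseteq> {..<n}" for t unfolding pr_def present_def by auto
  have prfin: "finite (pr t)" for t using prsub finite_subset by blast
  have prcard: "card (pr t) \<le> n" for t using card_mono[OF _ prsub] by fastforce
  define CS where "CS = (\<lambda>t. card (pr t)) ` {t. t \<le> H}"
  have finCS: "finite CS" unfolding CS_def
    by (rule finite_subset[of _ "{..n}"]) (use prcard in auto)
  have p0: "0 \<in> pr 0" unfolding pr_def present_def using assms(3,4) n0 by force
  have H0: "0 \<le> H" using dH assms(3,4) n0 by force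
  have m_def': "m = Max CS" unfolding m_def CS_def max_present_def pr_def H_def by simp
  have cardle: "card (pr t) \<le> m" if "t \<le> H" for t
    unfolding m_def' using finCS that by (auto simp: CS_def intro!: Max_ge)
  have "m \<in> CS" unfolding m_def' using finCS H0 by (intro Max_in) (auto simp: CS_def)
  then obtain t0 where t0: "t0 \<le> H" "card (pr t0) = m" unfolding CS_def by auto
  have "card (pr 0) \<ge> 1" using p0 prfin[of 0] by (metis One_nat_def Suc_leI card_gt_0_iff empty_iff)
  then have m1: "m \<ge> 1" using cardle[OF H0] by linarith
  have pr_le_H: "t \<le> H" if "pr t \<noteq> {}" for t
    using that dH unfolding pr_def present_def by force
  define Tset where "Tset = {t. t \<le> H \<and> pr t \<noteq> {}}"
  define G where "G = (\<lambda>X. Inf ((\<lambda>t. dmin_set P (pr t) X) ` Tset))"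
  define F where "F = (\<lambda>X. dmin_set P {..<m} X)"
  define A where "A = {X::nat\<Rightarrow>'a. \<forall>i<m. X i \<in> P}"
  define B where "B = {X::nat\<Rightarrow>'a. \<forall>i<n. X i \<in> P}"
  have opt: "OPT_A n s d P = Sup (G ` B)"
    unfolding OPT_A_def G_def B_def Tset_def pr_def H_def by simp
  have disp: "Disp (max_present n s d) P = Sup (F ` A)"
    unfolding Disp_def F_def A_def m_def by simp
  have Tfin: "finite ((\<lambda>t. dmin_set P (pr t) X) ` Tset)" for X
  proof -
    have "(\<lambda>t. dmin_set P (pr t) X) ` Tset \<subseteq> (\<lambda>I. dmin_set P I X) ` Pow {..<n}"
      using prsub by auto
    then show ?thesis by (rule finite_subset) auto
  qed
  have G_le: "G X \<le> dmin_set P (pr t) X" if "t \<in> Tset" for X t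
    unfolding G_def using that Tfin by (intro cInf_lower) auto
  have T0: "0 \<in> Tset" unfolding Tset_def using H0 p0 by auto
  show ?thesis
  proof (cases "P = {}")
    case True
    have "A = {}"
    proof (rule ccontr)
      assume "A \<noteq> {}" then obtain X where "X \<in> A" by blast
      then have "X 0 \<in> P" using m1 unfolding A_def by simp
      with True show False by simp
    qed
    moreover have "B = {}"
    proof (rule ccontr)
      assume "B \<noteq> {}" then obtain X where "X \<in> B" by blast
      then have "X 0 \<in> P" using n0 unfolding B_def by simp
      with True show False by simp
    qed
    ultimately have "A = {}" "B = {}" by auto
    then show ?thesis using opt disp by simp
  next
    case False
    then obtain p where p: "p \<in> P" by blast
    obtain Bd where Bd: "\<forall>x\<in>P. infdist x (frontier P) \<le> Bd"
      using infdist_bound[OF polytope_imp_bounded[OF assms(1)]] by blast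
    have An: "A \<noteq> {}" "B \<noteq> {}" unfolding A_def B_def using p by auto
    have bA: "bdd_above (F ` A)"
    proof (rule bdd_aboveI[of _ Bd])
      fix y assume "y \<in> F ` A"
      then obtain Y where "Y \<in> A" "y = F Y" by auto
      moreover have "Y 0 \<in> P" using \<open>Y \<in> A\<close> m1 unfolding A_def by simp
      moreover have "F Y \<le> infdist (Y 0) (frontier P)"
        unfolding F_def using m1 by (intro dmin_le_infdist) simp
      ultimately show "y \<le> Bd" using Bd by force
    qed
    have bB: "bdd_above (G ` B)"
    proof (rule bdd_aboveI[of _ Bd])
      fix y assume "y \<in> G ` B"
      then obtain X where "X \<in> B" "y = G X" by auto
      moreover have "X 0 \<in> P" using \<open>X \<in> B\<close> n0 unfolding B_def by simp
      moreover have "G X \<le> infdist (X 0) (frontier P)"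
        using G_le[OF T0, of X] dmin_le_infdist[OF p0, of P X] by linarith
      ultimately show "y \<le> Bd" using Bd by force
    qed
    have le1: "Sup (G ` B) \<le> Sup (F ` A)"
    proof (rule cSup_least)
      show "G ` B \<noteq> {}" using An by auto
      fix y assume "y \<in> G ` B"
      then obtain X where X: "X \<in> B" "y = G X" by auto
      obtain e where e: "bij_betw e {0..<card (pr t0)} (pr t0)"
        using ex_bij_betw_nat_finite[OF prfin] by blast
      have einj: "inj_on e {..<m}" and eim: "e ` {..<m} \<subseteq> pr t0"
        using e t0 by (auto simp: bij_betw_def atLeast0LessThan)
      have t0T: "t0 \<in> Tset" unfolding Tset_def using t0 m1 by auto
      have "X \<circ> e \<in> A" using X eim prsub unfolding A_def B_def by force
      have "y \<le> dmin_set P (pr t0) X" using G_le[OF t0T] X by simp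
      also have "\<dots> \<le> F (X \<circ> e)" unfolding F_def
        by (rule dmin_sub) (use m1 einj eim in \<open>auto simp: lessThan_empty_iff\<close>)
      also have "\<dots> \<le> Sup (F ` A)" using bA \<open>X \<circ> e \<in> A\<close> by (intro cSup_upper) auto
      finally show "y \<le> Sup (F ` A)" .
    qed
    obtain c where c1: "\<forall>i<n. c i < m" and c2: "\<forall>i<n. \<forall>j<n. i \<noteq> j \<and>
      (\<exists>t. i \<in> present n s d t \<and> j \<in> present n s d t) \<longrightarrow> c i \<noteq> c j"
    proof -
      have "\<forall>k<n. card (present n s d (s k)) \<le> m"
      proof (intro allI impI)
        fix k assume "k < n"
        then have "s k \<le> H" using dH assms(3) by (meson less_imp_le order_trans)
        then show "card (present n s d (s k)) \<le> m" using cardle unfolding pr_def by blast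
      qed
      moreover have "\<forall>i<n. s i \<le> d i" using assms(3) by (simp add: less_imp_le)
      ultimately have "\<exists>c. (\<forall>i<n. c i < m) \<and> (\<forall>i<n. \<forall>j<n. i \<noteq> j \<and>
      (\<exists>t. i \<in> present n s d t \<and> j \<in> present n s d t) \<longrightarrow> c i \<noteq> c j)"
        using coloring_aux[of n s d m n] assms(5) by simp
      then show ?thesis using that by blast
    qed
    have le2: "Sup (F ` A) \<le> Sup (G ` B)"
    proof (rule cSup_least)
      show "F ` A \<noteq> {}" using An by auto
      fix y assume "y \<in> F ` A"
      then obtain Y where Y: "Y \<in> A" "y = F Y" by auto
      have XB: "Y \<circ> c \<in> B" using Y c1 unfolding A_def B_def by auto
      have "F Y \<le> G (Y \<circ> c)" unfolding G_def
      proof (rule cInf_greatest)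
        show "(\<lambda>t. dmin_set P (pr t) (Y \<circ> c)) ` Tset \<noteq> {}" using T0 by auto
        fix z assume "z \<in> (\<lambda>t. dmin_set P (pr t) (Y \<circ> c)) ` Tset"
        then obtain t where t: "t \<in> Tset" "z = dmin_set P (pr t) (Y \<circ> c)" by auto
        have "F Y \<le> dmin_set P (pr t) (Y \<circ> c)"
        proof (rule dmin_ge)
          show "pr t \<noteq> {}" using t unfolding Tset_def by auto
          fix i assume "i \<in> pr t"
          then show "F Y \<le> infdist ((Y \<circ> c) i) (frontier P)"
            unfolding F_def using prsub c1 by (auto intro!: dmin_le_infdist)
        next
          fix i j assume "i \<in> pr t" "j \<in> pr t" "i \<noteq> j"
          moreover have "i < n" "j < n" using \<open>i \<in> pr t\<close> \<open>j \<in> pr t\<close> prsub by auto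
          ultimately have "c i \<noteq> c j" "c i < m" "c j < m" using c2 c1 unfolding pr_def by auto
          then show "F Y \<le> dist ((Y \<circ> c) i) ((Y \<circ> c) j)"
            unfolding F_def by (auto intro!: dmin_le_dist)
        qed
        then show "F Y \<le> z" using t by simp
      qed
      also have "\<dots> \<le> Sup (G ` B)" using bB XB by (intro cSup_upper) auto
      finally show "y \<le> Sup (G ` B)" using Y by simp
    qed
    show ?thesis using opt disp le1 le2 by simp
  qed
qed

end
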